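(* With the notation of the context, the infimum $\beta^*=\inf_{x\in\Delta}F(x)$ is attained at exactly one point of $\Delta$; that is, the optimal point of $\inf_{x\in\Delta}F(x)$ is unique.
   Context: Fix an integer $n\ge2$ and free generators $\xi_1,\dots,\xi_n$ of a free group; throughout $i,j,k\in\{1,\dots,n\}$ and $t,s,p\in\{-1,+1\}$. Let $\Psi$ be the set of reduced words $\xi_i^{2t}$; $\xi_i^t\xi_j^{2s}$ ($i\ne j$); $\xi_i^t\xi_j^s\xi_k^p$ ($i\ne j$, $j\ne k$). For a letter $\xi_a^x$ let $S(\xi_a^x)\subset\Psi$ be the set of words in $\Psi$ beginning with $\xi_a^x$, namely $\{\xi_a^{2x}\}\cup\{\xi_a^x\xi_j^{2s}\}\cup\{\xi_a^x\xi_j^s\xi_k^p\}$; for $a\ne b$ let $S(\xi_a^x\xi_b^y)=\{\xi_a^x\xi_b^{2y}\}\cup\{\xi_a^x\xi_b^y\xi_k^p: k\ne b\}$. A relation $r$ is a pair $(\psi_r,\Psi_r)$ with $\psi_r\in\Psi$, $\Psi_r\subseteq\Psi$. Let $\mathcal{F}$ be the collection of the following relations (indices $i_0\ne j_0$, in type 5a $i_0,j_0,k_0$ pairwise distinct, all signs arbitrary): 1a: $\psi_r=\xi_{i_0}^{2t_0}$, $\Psi_r=\Psi\setminus S(\xi_{i_0}^{t_0})$; 2b: $\psi_r=\xi_{i_0}^{t_0}\xi_{j_0}^{2s_0}$, $\Psi_r=\Psi\setminus S(\xi_{i_0}^{t_0}\xi_{j_0}^{s_0})$; 3a: $\psi_r=\xi_{i_0}^{t_0}\xi_{j_0}^{s_0}\xi_{i_0}^{t_0}$,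 $\Psi_r=\Psi\setminus S(\xi_{j_0}^{s_0}\xi_{i_0}^{t_0})$; 4b: $\psi_r=\xi_{i_0}^{t_0}\xi_{j_0}^{s_0}\xi_{i_0}^{-t_0}$, $\Psi_r=S(\xi_{i_0}^{t_0})$; 5a: $\psi_r=\xi_{i_0}^{t_0}\xi_{j_0}^{s_0}\xi_{k_0}^{p_0}$, $\Psi_r=\Psi\setminus S(\xi_{j_0}^{s_0}\xi_{k_0}^{p_0})$. Let $\Delta=\{x\in\mathbb{R}^\Psi: x(\psi)>0\ \forall\psi,\ \sum_{\psi}x(\psi)=1\}$. For a relation $r$ and $x\in\Delta$ put $x_r=x(\psi_r)$, $X_r=\sum_{\psi\in\Psi_r}x(\psi)$, $f_r(x)=\frac{1-x_r}{x_r}\cdot\frac{1-X_r}{X_r}$, and $F(x)=\max_{r\in\mathcal{F}}f_r(x)$. *)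

theory Defs
  imports Complex_Main
begin

text \<open>A letter \<open>\<xi>_i^t\<close> is the pair \<open>(i, t)\<close> with \<open>i \<in> {1..n}\<close>, \<open>t \<in> {-1,1}\<close>;
  a (reduced) word is the list of its letters, e.g. \<open>\<xi>_i^{2t}\<close> is \<open>[(i,t),(i,t)]\<close>.\<close>

type_synonym letter = "nat \<times> int"
type_synonym word = "letter list"

definition signs :: "int set" where
  "signs = {-1, 1}"

definition Psi :: "nat \<Rightarrow> word set" where
  "Psi n =
     {[(i,t),(i,t)] | i t. i \<in> {1..n} \<and> t \<in> signs}
   \<union> {[(i,t),(j,s),(j,s)] | i t j s. i \<in> {1..n} \<and> j \<in> {1..n} \<and> t \<in> signs \<and> s \<in> signs \<and> i \<noteq> j}
   \<union> {[(i,t),(j,s),(k,p)] | i t j s k p. i \<in> {1..n} \<and> j \<in> {1..n} \<and> k \<in> {1..n}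
        \<and> t \<in> signs \<and> s \<in> signs \<and> p \<in> signs \<and> i \<noteq> j \<and> j \<noteq> k}"

definition S1 :: "nat \<Rightarrow> letter \<Rightarrow> word set" where
  "S1 n l =
     {[l, l]}
   \<union> {[l,(j,s),(j,s)] | j s. j \<in> {1..n} \<and> s \<in> signs \<and> j \<noteq> fst l}
   \<union> {[l,(j,s),(k,p)] | j s k p. j \<in> {1..n} \<and> k \<in> {1..n} \<and> s \<in> signs \<and> p \<in> signs
        \<and> j \<noteq> fst l \<and> j \<noteq> k}"

definition S2 :: "nat \<Rightarrow> letter \<Rightarrow> letter \<Rightarrow> word set" where
  "S2 n l m =
     {[l, m, m]}
   \<union> {[l, m, (k,p)] | k p. k \<in> {1..n} \<and> p \<in> signs \<and> k \<noteq> fst m}"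

text \<open>A relation is a pair \<open>(\<psi>_r, \<Psi>_r)\<close>; \<open>Fam n\<close> is the collection \<open>\<F>\<close>.\<close>
definition Fam :: "nat \<Rightarrow> (word \<times> word set) set" where
  "Fam n =
     {([(i,t),(i,t)], Psi n - S1 n (i,t)) | i t. i \<in> {1..n} \<and> t \<in> signs}
   \<union> {([(i,t),(j,s),(j,s)], Psi n - S2 n (i,t) (j,s)) | i t j s.
        i \<in> {1..n} \<and> j \<in> {1..n} \<and> t \<in> signs \<and> s \<in> signs \<and> i \<noteq> j}
   \<union> {([(i,t),(j,s),(i,t)], Psi n - S2 n (j,s) (i,t)) | i t j s.
        i \<in> {1..n} \<and> j \<in> {1..n} \<and> t \<in> signs \<and> s \<in> signs \<and> i \<noteq> j}
   \<union> {([(i,t),(j,s),(i,-t)], S1 n (i,t)) | i t j s.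
        i \<in> {1..n} \<and> j \<in> {1..n} \<and> t \<in> signs \<and> s \<in> signs \<and> i \<noteq> j}
   \<union> {([(i,t),(j,s),(k,p)], Psi n - S2 n (j,s) (k,p)) | i t j s k p.
        i \<in> {1..n} \<and> j \<in> {1..n} \<and> k \<in> {1..n} \<and> t \<in> signs \<and> s \<in> signs \<and> p \<in> signs
        \<and> i \<noteq> j \<and> j \<noteq> k \<and> i \<noteq> k}"

text \<open>The open simplex \<open>\<Delta>\<close> in \<open>\<real>^\<Psi>\<close>; points are functions vanishing off \<open>\<Psi>\<close>.\<close>
definition Delta :: "nat \<Rightarrow> (word \<Rightarrow> real) set" where
  "Delta n = {x. (\<forall>\<psi>\<in>Psi n. x \<psi> > 0) \<and> (\<forall>\<psi>. \<psi> \<notin> Psi n \<longrightarrow> x \<psi> = 0)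
                 \<and> (\<Sum>\<psi>\<in>Psi n. x \<psi>) = 1}"

definition frel :: "word \<times> word set \<Rightarrow> (word \<Rightarrow> real) \<Rightarrow> real" where
  "frel r x = (let xr = x (fst r); Xr = (\<Sum>\<psi>\<in>snd r. x \<psi>)
               in ((1 - xr) / xr) * ((1 - Xr) / Xr))"

definition FF :: "nat \<Rightarrow> (word \<Rightarrow> real) \<Rightarrow> real" where
  "FF n x = Max ((\<lambda>r. frel r x) ` Fam n)"

end

theory Submission
  imports Defs
begin

definition LL :: "nat \<Rightarrow> letter set" where "LL n = {1..n} \<times> signs"
definition Lm :: "nat \<Rightarrow> letter \<Rightarrow> letter set" where "Lm n l = {m \<in> LL n. fst m \<noteq> fst l}"
definition El :: "nat \<Rightarrow> letter \<Rightarrow> letter \<Rightarrow> letter set" where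
  "El n l m = {q \<in> LL n. fst q \<noteq> fst l \<and> fst q \<noteq> fst m}"
definition ng :: "letter \<Rightarrow> letter" where "ng l = (fst l, - snd l)"

lemma signs_card: "card signs = 2" by (simp add: signs_def)
lemma finite_signs: "finite signs" by (simp add: signs_def)
lemma finite_LL[simp]: "finite (LL n)" by (simp add: LL_def finite_signs)
lemma finite_Lm[simp]: "finite (Lm n l)" by (simp add: Lm_def)
lemma finite_El[simp]: "finite (El n l m)" by (simp add: El_def)

lemma card_LL: "card (LL n) = 2*n"
  by (simp add: LL_def card_cartesian_product signs_card)

lemma Lm_eq: "Lm n l = ({1..n} - {fst l}) \<times> signs"
  by (auto simp: Lm_def LL_def)
lemma card_Lm: "fst l \<in> {1..n} \<Longrightarrow> card (Lm n l) = 2*(n-1)"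
  by (simp add: Lm_eq card_cartesian_product signs_card)
lemma El_eq: "El n l m = ({1..n} - {fst l, fst m}) \<times> signs"
  by (auto simp: El_def LL_def)
lemma card_El: "fst l \<in> {1..n} \<Longrightarrow> fst m \<in> {1..n} \<Longrightarrow> fst l \<noteq> fst m \<Longrightarrow> card (El n l m) = 2*(n-2)"
  by (simp add: El_eq card_cartesian_product signs_card card_Diff_subset)

lemma S2_eq: "S2 n l m = insert [l,m,m] ((\<lambda>q. [l,m,q]) ` Lm n m)"
  by (auto simp: S2_def Lm_def LL_def)

lemma S1_eq: "S1 n l = insert [l,l] (\<Union>m\<in>Lm n l. S2 n l m)"
  by (auto simp: S1_def S2_def Lm_def LL_def)

lemma Psi_eq: "Psi n = (\<Union>l\<in>LL n. S1 n l)"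
  by (auto simp: Psi_def S1_def LL_def)

lemma finite_S2[simp]: "finite (S2 n l m)" by (simp add: S2_eq)
lemma finite_S1[simp]: "finite (S1 n l)" by (simp add: S1_eq)
lemma finite_Psi[simp]: "finite (Psi n)" by (simp add: Psi_eq)

lemma sum_S2: "sum h (S2 n l m) = h [l,m,m] + (\<Sum>q\<in>Lm n m. h [l,m,q])"
proof -
  have "[l,m,m] \<notin> (\<lambda>q. [l,m,q]) ` Lm n m" by (auto simp: Lm_def)
  moreover have "inj_on (\<lambda>q. [l,m,q]) (Lm n m)" by (auto simp: inj_on_def)
  ultimately show ?thesis by (simp add: S2_eq sum.reindex)
qed

lemma sum_S1: "sum h (S1 n l) = h [l,l] + (\<Sum>m\<in>Lm n l. sum h (S2 n l m))"
proof -
  have "[l,l] \<notin> (\<Union>m\<in>Lm n l. S2 n l m)" by (auto simp: S2_eq)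
  moreover have "sum h (\<Union>m\<in>Lm n l. S2 n l m) = (\<Sum>m\<in>Lm n l. sum h (S2 n l m))"
    by (rule sum.UNION_disjoint) (auto simp: S2_eq)
  ultimately show ?thesis by (simp add: S1_eq)
qed

lemma sum_Psi: "sum h (Psi n) = (\<Sum>l\<in>LL n. sum h (S1 n l))"
  unfolding Psi_eq
  by (rule sum.UNION_disjoint) (auto simp: S1_eq S2_eq)

lemma sum_Lm_split:
  assumes "l \<in> LL n" "fst l \<noteq> fst m"
  shows "(\<Sum>q\<in>Lm n m. g q) = g l + g (ng l) + (\<Sum>q\<in>El n l m. g q)"
proof -
  have l1: "l \<in> Lm n m" using assms by (auto simp: Lm_def)
  have l2: "ng l \<in> Lm n m - {l}" using assms by (auto simp: Lm_def LL_def ng_def signs_def)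
  have e: "El n l m = Lm n m - {l} - {ng l}"
  proof (intro set_eqI iffI)
    fix q assume "q \<in> El n l m"
    then show "q \<in> Lm n m - {l} - {ng l}" by (auto simp: El_def Lm_def ng_def)
  next
    fix q assume q: "q \<in> Lm n m - {l} - {ng l}"
    have "fst q \<noteq> fst l"
    proof
      assume h: "fst q = fst l"
      have "snd q \<in> signs" "snd l \<in> signs" using q assms(1) by (auto simp: Lm_def LL_def mem_Times_iff)
      then have "snd q = snd l \<or> snd q = - snd l" by (auto simp: signs_def)
      then show False using q h by (auto simp: ng_def prod_eq_iff)
    qed
    then show "q \<in> El n l m" using q by (auto simp: El_def Lm_def)
  qed
  show ?thesis
    using l1 l2 by (simp add: e sum.remove[of "Lm n m" l] sum.remove[of "Lm n m - {l}" "ng l"] algebra_simps)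
qed

lemma sum_swap_Lm:
  "(\<Sum>l\<in>LL n. \<Sum>m\<in>Lm n l. g l m) = (\<Sum>l\<in>LL n. \<Sum>m\<in>Lm n l. g m l)"
proof -
  have "(\<Sum>l\<in>LL n. \<Sum>m\<in>Lm n l. g l m) = (\<Sum>m\<in>LL n. \<Sum>l\<in>{l. l \<in> LL n \<and> fst m \<noteq> fst l}. g l m)"
    unfolding Lm_def by (rule sum.swap_restrict) auto
  also have "\<dots> = (\<Sum>m\<in>LL n. \<Sum>l\<in>Lm n m. g l m)"
    by (rule sum.cong[OF refl], rule sum.cong) (auto simp: Lm_def)
  finally show ?thesis .
qed

lemma sum_triple:
  "(\<Sum>l\<in>LL n. \<Sum>m\<in>Lm n l. \<Sum>q\<in>El n l m. g m q) = real (2*(n-2)) * (\<Sum>l\<in>LL n. \<Sum>m\<in>Lm n l. g l m)"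
proof -
  have "(\<Sum>l\<in>LL n. \<Sum>m\<in>Lm n l. \<Sum>q\<in>El n l m. g m q) = (\<Sum>m\<in>LL n. \<Sum>l\<in>{l. l \<in> LL n \<and> fst m \<noteq> fst l}. \<Sum>q\<in>El n l m. g m q)"
    unfolding Lm_def by (rule sum.swap_restrict) auto
  also have "\<dots> = (\<Sum>m\<in>LL n. \<Sum>q\<in>Lm n m. real (2*(n-2)) * g m q)"
  proof (rule sum.cong[OF refl])
    fix m assume m: "m \<in> LL n"
    have "(\<Sum>l\<in>{l. l \<in> LL n \<and> fst m \<noteq> fst l}. \<Sum>q\<in>El n l m. g m q)
        = (\<Sum>l\<in>{l. l \<in> LL n \<and> fst m \<noteq> fst l}. \<Sum>q\<in>{q. q \<in> LL n \<and> (fst q \<noteq> fst l \<and> fst q \<noteq> fst m)}. g m q)"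
      by (simp add: El_def)
    also have "\<dots> = (\<Sum>q\<in>LL n. \<Sum>l\<in>{l. l \<in> {l. l \<in> LL n \<and> fst m \<noteq> fst l} \<and> (fst q \<noteq> fst l \<and> fst q \<noteq> fst m)}. g m q)"
      by (rule sum.swap_restrict) auto
    also have "\<dots> = (\<Sum>q\<in>LL n. if fst q \<noteq> fst m then real (2*(n-2)) * g m q else 0)"
    proof (rule sum.cong[OF refl])
      fix q assume q: "q \<in> LL n"
      show "(\<Sum>l\<in>{l. l \<in> {l. l \<in> LL n \<and> fst m \<noteq> fst l} \<and> (fst q \<noteq> fst l \<and> fst q \<noteq> fst m)}. g m q)
          = (if fst q \<noteq> fst m then real (2*(n-2)) * g m q else 0)"
      proof (cases "fst q = fst m")
        case True then show ?thesis by simp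
      next
        case False
        have "{l. l \<in> {l. l \<in> LL n \<and> fst m \<noteq> fst l} \<and> (fst q \<noteq> fst l \<and> fst q \<noteq> fst m)} = El n m q"
          using False by (auto simp: El_def)
        moreover have "card (El n m q) = 2*(n-2)" using False m q card_El[of m n q] by (auto simp: LL_def)
        ultimately show ?thesis using False by simp
      qed
    qed
    also have "\<dots> = (\<Sum>q\<in>Lm n m. real (2*(n-2)) * g m q)"
      unfolding Lm_def sum.inter_filter[OF finite_LL] by (rule sum.cong) auto
    finally show "(\<Sum>l\<in>{l. l \<in> LL n \<and> fst m \<noteq> fst l}. \<Sum>q\<in>El n l m. g m q) = (\<Sum>q\<in>Lm n m. real (2*(n-2)) * g m q)" .
  qed
  also have "\<dots> = real (2*(n-2)) * (\<Sum>l\<in>LL n. \<Sum>m\<in>Lm n l. g l m)"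
    by (simp only: sum_distrib_left)
  finally show ?thesis .
qed


lemma words_in_S1:
  assumes "l \<in> LL n"
  shows "sum h (S1 n l) = h [l,l] + (\<Sum>m\<in>Lm n l. h [l,m,m] + h [l,m,l] + h [l,m,ng l] + (\<Sum>q\<in>El n l m. h [l,m,q]))"
proof -
  have "\<And>m. m \<in> Lm n l \<Longrightarrow> sum h (S2 n l m) = h [l,m,m] + h [l,m,l] + h [l,m,ng l] + (\<Sum>q\<in>El n l m. h [l,m,q])"
  proof -
    fix m assume m: "m \<in> Lm n l"
    have ne: "fst l \<noteq> fst m" using m by (auto simp: Lm_def)
    show "sum h (S2 n l m) = h [l,m,m] + h [l,m,l] + h [l,m,ng l] + (\<Sum>q\<in>El n l m. h [l,m,q])"
      using sum_Lm_split[OF assms ne, of "\<lambda>q. h [l,m,q]"] by (simp add: sum_S2 algebra_simps)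
  qed
  then show ?thesis by (simp add: sum_S1)
qed

lemma Tot_zero:
  fixes h :: "word \<Rightarrow> real" and gA gB gD :: real
  assumes n2: "n \<ge> 2" and h0: "sum h (Psi n) = 0"
  shows "(1 - real (2*n-2) * gB) * (\<Sum>l\<in>LL n. - gA * sum h (S1 n l) + h [l,l])
     + (\<Sum>l\<in>LL n. \<Sum>m\<in>Lm n l.
          (- gB * sum h (S2 n l m) + h [l,m,m]) + (- gB * sum h (S2 n m l) + h [l,m,l])
        + (gD * sum h (S1 n l) + h [l,m,ng l])
        + (\<Sum>q\<in>El n l m. - gB * sum h (S2 n m q) + h [l,m,q])) = 0"
proof -
  define T where "T = (\<Sum>l\<in>LL n. h [l,l])"
  define A1 where "A1 = (\<Sum>l\<in>LL n. sum h (S1 n l))"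
  define A2 where "A2 = (\<Sum>l\<in>LL n. \<Sum>m\<in>Lm n l. sum h (S2 n l m))"
  define A3 where "A3 = (\<Sum>l\<in>LL n. \<Sum>m\<in>Lm n l. sum h (S2 n m l))"
  define A4 where "A4 = (\<Sum>l\<in>LL n. \<Sum>m\<in>Lm n l. \<Sum>q\<in>El n l m. sum h (S2 n m q))"
  define A5 where "A5 = (\<Sum>l\<in>LL n. \<Sum>m\<in>Lm n l. sum h (S1 n l))"
  define A6 where "A6 = (\<Sum>l\<in>LL n. \<Sum>m\<in>Lm n l. h [l,m,m] + h [l,m,l] + h [l,m,ng l] + (\<Sum>q\<in>El n l m. h [l,m,q]))"
  have a1: "A1 = 0" using h0 by (simp add: A1_def sum_Psi)
  have a2: "A2 = - T"
  proof -
    have "A1 = T + A2" unfolding A1_def A2_def T_def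
      by (simp add: sum_S1 sum.distrib)
    then show ?thesis using a1 by simp
  qed
  have a3: "A3 = - T" using a2 unfolding A3_def A2_def by (simp add: sum_swap_Lm[where g="\<lambda>l m. sum h (S2 n l m)"])
  have a4: "A4 = real (2*(n-2)) * (- T)" using a2 unfolding A4_def A2_def by (simp add: sum_triple)
  have a5: "A5 = 0"
  proof -
    have "A5 = (\<Sum>l\<in>LL n. real (2*(n-1)) * sum h (S1 n l))" unfolding A5_def
      by (rule sum.cong) (auto simp: card_Lm LL_def)
    also have "\<dots> = real (2*(n-1)) * A1" by (simp add: A1_def sum_distrib_left)
    finally show ?thesis using a1 by simp
  qed
  have a6: "A6 = - T"
  proof -
    have "A1 = T + A6" unfolding A1_def A6_def T_def
      by (simp add: words_in_S1 sum.distrib)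
    then show ?thesis using a1 by simp
  qed
  have r: "real (2*(n-2)) = 2 * real n - 4" using n2 by (simp add: of_nat_diff)
  have a4': "A4 = - (2 * real n - 4) * T" using a4 unfolding r by (simp add: algebra_simps)
  have "(1 - real (2*n-2) * gB) * (\<Sum>l\<in>LL n. - gA * sum h (S1 n l) + h [l,l])
     + (\<Sum>l\<in>LL n. \<Sum>m\<in>Lm n l.
          (- gB * sum h (S2 n l m) + h [l,m,m]) + (- gB * sum h (S2 n m l) + h [l,m,l])
        + (gD * sum h (S1 n l) + h [l,m,ng l])
        + (\<Sum>q\<in>El n l m. - gB * sum h (S2 n m q) + h [l,m,q]))
     = (1 - real (2*n-2) * gB) * (- gA * A1 + T) + (- gB * A2 - gB * A3 + gD * A5 - gB * A4 + A6)"
    unfolding A1_def A2_def A3_def A4_def A5_def A6_def T_def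
    by (simp only: sum.distrib sum_distrib_left[symmetric])
  also have "\<dots> = 0"
  proof -
    have r2: "real (2*n-2) = 2 * real n - 2" using n2 by (simp add: of_nat_diff)
    show ?thesis unfolding a1 a2 a3 a4' a5 a6 r2 by (simp add: algebra_simps)
  qed
  finally show ?thesis .
qed

lemma Fam_cases:
  assumes r: "r \<in> Fam n"
  obtains (A) l where "l \<in> LL n" "r = ([l,l], Psi n - S1 n l)"
  | (B) l m where "l \<in> LL n" "m \<in> Lm n l" "r = ([l,m,m], Psi n - S2 n l m)"
  | (C) l m where "l \<in> LL n" "m \<in> Lm n l" "r = ([l,m,l], Psi n - S2 n m l)"
  | (D) l m where "l \<in> LL n" "m \<in> Lm n l" "r = ([l,m,ng l], S1 n l)"
  | (E) l m q where "l \<in> LL n" "m \<in> Lm n l" "q \<in> El n l m" "r = ([l,m,q], Psi n - S2 n m q)"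
proof -
  consider (a) "r \<in> {([(i,t),(i,t)], Psi n - S1 n (i,t)) | i t. i \<in> {1..n} \<and> t \<in> signs}"
    | (b) "r \<in> {([(i,t),(j,s),(j,s)], Psi n - S2 n (i,t) (j,s)) | i t j s.
        i \<in> {1..n} \<and> j \<in> {1..n} \<and> t \<in> signs \<and> s \<in> signs \<and> i \<noteq> j}"
    | (c) "r \<in> {([(i,t),(j,s),(i,t)], Psi n - S2 n (j,s) (i,t)) | i t j s.
        i \<in> {1..n} \<and> j \<in> {1..n} \<and> t \<in> signs \<and> s \<in> signs \<and> i \<noteq> j}"
    | (d) "r \<in> {([(i,t),(j,s),(i,-t)], S1 n (i,t)) | i t j s.
        i \<in> {1..n} \<and> j \<in> {1..n} \<and> t \<in> signs \<and> s \<in> signs \<and> i \<noteq> j}"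
    | (e) "r \<in> {([(i,t),(j,s),(k,p)], Psi n - S2 n (j,s) (k,p)) | i t j s k p.
        i \<in> {1..n} \<and> j \<in> {1..n} \<and> k \<in> {1..n} \<and> t \<in> signs \<and> s \<in> signs \<and> p \<in> signs
        \<and> i \<noteq> j \<and> j \<noteq> k \<and> i \<noteq> k}"
    using r unfolding Fam_def by blast
  then show ?thesis
  proof cases
    case a
    then obtain i t where "i \<in> {1..n}" "t \<in> signs" "r = ([(i,t),(i,t)], Psi n - S1 n (i,t))" by blast
    then show ?thesis using that(1)[of "(i,t)"] by (auto simp: LL_def)
  next
    case b
    then obtain i t j s where "i \<in> {1..n}" "j \<in> {1..n}" "t \<in> signs" "s \<in> signs" "i \<noteq> j"
      "r = ([(i,t),(j,s),(j,s)], Psi n - S2 n (i,t) (j,s))" by blast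
    then show ?thesis using that(2)[of "(i,t)" "(j,s)"] by (auto simp: LL_def Lm_def)
  next
    case c
    then obtain i t j s where "i \<in> {1..n}" "j \<in> {1..n}" "t \<in> signs" "s \<in> signs" "i \<noteq> j"
      "r = ([(i,t),(j,s),(i,t)], Psi n - S2 n (j,s) (i,t))" by blast
    then show ?thesis using that(3)[of "(i,t)" "(j,s)"] by (auto simp: LL_def Lm_def)
  next
    case d
    then obtain i t j s where "i \<in> {1..n}" "j \<in> {1..n}" "t \<in> signs" "s \<in> signs" "i \<noteq> j"
      "r = ([(i,t),(j,s),(i,-t)], S1 n (i,t))" by blast
    then show ?thesis using that(4)[of "(i,t)" "(j,s)"] by (auto simp: LL_def Lm_def ng_def)
  next
    case e
    then obtain i t j s k p where "i \<in> {1..n}" "j \<in> {1..n}" "k \<in> {1..n}" "t \<in> signs" "s \<in> signs" "p \<in> signs"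
      "i \<noteq> j" "j \<noteq> k" "i \<noteq> k"
      "r = ([(i,t),(j,s),(k,p)], Psi n - S2 n (j,s) (k,p))" by blast
    then show ?thesis using that(5)[of "(i,t)" "(j,s)" "(k,p)"] by (auto simp: LL_def Lm_def El_def)
  qed
qed

lemma LL_cases: "l \<in> LL n \<Longrightarrow> (\<And>i t. l = (i,t) \<Longrightarrow> i \<in> {1..n} \<Longrightarrow> t \<in> signs \<Longrightarrow> P) \<Longrightarrow> P"
  by (cases l) (auto simp: LL_def)

lemma Fam_A: "l \<in> LL n \<Longrightarrow> ([l,l], Psi n - S1 n l) \<in> Fam n"
  by (erule LL_cases) (auto simp: Fam_def)

lemma Fam_B: assumes "l \<in> LL n" "m \<in> Lm n l" shows "([l,m,m], Psi n - S2 n l m) \<in> Fam n"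
proof -
  obtain i t where l: "l = (i,t)" "i \<in> {1..n}" "t \<in> signs" using assms(1) by (auto simp: LL_def)
  obtain j s where m: "m = (j,s)" "j \<in> {1..n}" "s \<in> signs" "i \<noteq> j" using assms(2) l by (auto simp: Lm_def LL_def)
  show ?thesis unfolding Fam_def l(1) m(1) using l m by blast
qed

lemma Fam_C: assumes "l \<in> LL n" "m \<in> Lm n l" shows "([l,m,l], Psi n - S2 n m l) \<in> Fam n"
proof -
  obtain i t where l: "l = (i,t)" "i \<in> {1..n}" "t \<in> signs" using assms(1) by (auto simp: LL_def)
  obtain j s where m: "m = (j,s)" "j \<in> {1..n}" "s \<in> signs" "i \<noteq> j" using assms(2) l by (auto simp: Lm_def LL_def)
  show ?thesis unfolding Fam_def l(1) m(1) using l m by blast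
qed

lemma Fam_D: assumes "l \<in> LL n" "m \<in> Lm n l" shows "([l,m,ng l], S1 n l) \<in> Fam n"
proof -
  obtain i t where l: "l = (i,t)" "i \<in> {1..n}" "t \<in> signs" using assms(1) by (auto simp: LL_def)
  obtain j s where m: "m = (j,s)" "j \<in> {1..n}" "s \<in> signs" "i \<noteq> j" using assms(2) l by (auto simp: Lm_def LL_def)
  show ?thesis unfolding Fam_def l(1) m(1) ng_def fst_conv snd_conv using l m by blast
qed

lemma Fam_E: assumes "l \<in> LL n" "m \<in> Lm n l" "q \<in> El n l m" shows "([l,m,q], Psi n - S2 n m q) \<in> Fam n"
proof -
  obtain i t where l: "l = (i,t)" "i \<in> {1..n}" "t \<in> signs" using assms(1) by (auto simp: LL_def)
  obtain j s where m: "m = (j,s)" "j \<in> {1..n}" "s \<in> signs" "i \<noteq> j" using assms(2) l by (auto simp: Lm_def LL_def)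
  obtain k p where q: "q = (k,p)" "k \<in> {1..n}" "p \<in> signs" "k \<noteq> i" "k \<noteq> j" using assms(3) l m by (auto simp: El_def LL_def)
  show ?thesis unfolding Fam_def l(1) m(1) q(1) using l m q by blast
qed

lemma S1_sub: "l \<in> LL n \<Longrightarrow> S1 n l \<subseteq> Psi n" by (auto simp: Psi_eq)
lemma S2_sub: "m \<in> Lm n l \<Longrightarrow> S2 n l m \<subseteq> S1 n l" by (auto simp: S1_eq)
lemma S2_sub': "l \<in> LL n \<Longrightarrow> m \<in> Lm n l \<Longrightarrow> S2 n l m \<subseteq> Psi n" using S1_sub S2_sub by blast
lemma Lm_LL: "m \<in> Lm n l \<Longrightarrow> m \<in> LL n" by (simp add: Lm_def)
lemma Lm_sym: "l \<in> LL n \<Longrightarrow> m \<in> Lm n l \<Longrightarrow> l \<in> Lm n m" by (auto simp: Lm_def)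
lemma El_Lm: "q \<in> El n l m \<Longrightarrow> q \<in> Lm n m" by (auto simp: El_def Lm_def)

lemma Fam_props:
  assumes "r \<in> Fam n"
  shows "fst r \<in> Psi n" "snd r \<subseteq> Psi n" "snd r \<noteq> {}"
proof -
  have "fst r \<in> Psi n \<and> snd r \<subseteq> Psi n \<and> snd r \<noteq> {}"
    using assms
  proof (cases rule: Fam_cases)
    case (A l)
    have "ng l \<in> LL n" using A(1) by (auto simp: LL_def ng_def signs_def)
    moreover have "[ng l, ng l] \<notin> S1 n l" using A(1) by (auto simp: S1_def ng_def LL_def signs_def)
    ultimately have "[ng l, ng l] \<in> Psi n - S1 n l" using S1_sub[of "ng l" n] by (auto simp: S1_def)
    moreover have "[l,l] \<in> Psi n" using S1_sub[OF A(1)] by (auto simp: S1_def)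
    ultimately show ?thesis using A by auto
  next
    case (B l m)
    have "[l,l] \<in> Psi n" using S1_sub[OF B(1)] by (auto simp: S1_def)
    moreover have "[l,m,m] \<in> Psi n" using S2_sub'[OF B(1,2)] by (auto simp: S2_def)
    ultimately show ?thesis using B by (auto simp: S2_def)
  next
    case (C l m)
    have "[l,l] \<in> Psi n" using S1_sub[OF C(1)] by (auto simp: S1_def)
    moreover have "[l,m,l] \<in> S2 n l m" using Lm_sym[OF C(1,2)] by (auto simp: S2_eq)
    then have "[l,m,l] \<in> Psi n" using S2_sub'[OF C(1,2)] by auto
    ultimately show ?thesis using C by (auto simp: S2_def)
  next
    case (D l m)
    have "[l,l] \<in> S1 n l" by (simp add: S1_def)
    moreover have "ng l \<in> Lm n m" using D(1,2) by (auto simp: Lm_def LL_def ng_def signs_def)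
    then have "[l,m,ng l] \<in> S2 n l m" by (auto simp: S2_eq)
    then have "[l,m,ng l] \<in> Psi n" using S2_sub'[OF D(1,2)] by auto
    ultimately show ?thesis using D S1_sub[OF D(1)] by auto
  next
    case (E l m q)
    have "[l,l] \<in> Psi n" using S1_sub[OF E(1)] by (auto simp: S1_def)
    moreover have "[l,m,q] \<in> S2 n l m" using El_Lm[OF E(3)] by (auto simp: S2_eq)
    then have "[l,m,q] \<in> Psi n" using S2_sub'[OF E(1,2)] by auto
    ultimately show ?thesis using E by (auto simp: S2_def)
  qed
  then show "fst r \<in> Psi n" "snd r \<subseteq> Psi n" "snd r \<noteq> {}" by auto
qed

lemma finite_Fam: "finite (Fam n)"
proof (rule finite_subset)
  show "Fam n \<subseteq> Psi n \<times> Pow (Psi n)" using Fam_props by fastforce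
qed simp

lemma Fam_ne: "n \<ge> 1 \<Longrightarrow> Fam n \<noteq> {}"
  using Fam_A[of "(1,1)" n] by (auto simp: LL_def signs_def)

lemma frel_le_FF: "r \<in> Fam n \<Longrightarrow> frel r x \<le> FF n x"
  unfolding FF_def by (rule Max_ge) (auto simp: finite_Fam)

lemma tangent_aux:
  fixes c u v u0 v0 :: real
  assumes c: "c > 1" and u: "u > 0" and v: "v > 0" and u0: "u0 > 0" and v0: "v0 > 0"
    and f: "(1-u)/u*((1-v)/v) \<le> c" and f0: "(1-u0)/u0*((1-v0)/v0) = c"
  shows "((v - v0)*(1+(c-1)*u0)^2 + c*(u-u0)) * (1+(c-1)*u) \<ge> c*(c-1)*(u-u0)^2"
proof -
  define k where "k = c - 1"
  have k: "k > 0" using c by (simp add: k_def)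
  have f': "(1-u)*(1-v) \<le> c*(u*v)" using f u v by (simp add: field_simps)
  have f0': "(1-u0)*(1-v0) = c*(u0*v0)" using f0 u0 v0 by (simp add: field_simps)
  have e1: "1 - u \<le> v*(1+k*u)" using f' by (simp add: k_def algebra_simps)
  have e2: "1 - u0 = v0*(1+k*u0)" using f0' by (simp add: k_def algebra_simps)
  have e3: "(1 + k*v0)*(1+k*u0) = c"
  proof -
    have "(1 + k*v0)*(1+k*u0) = 1 + k*u0 + k*(v0*(1+k*u0))" by (simp add: algebra_simps)
    also have "\<dots> = 1 + k" unfolding e2[symmetric] by (simp add: algebra_simps)
    finally show ?thesis by (simp add: k_def)
  qed
  have pos: "(1+k*u0)^2 \<ge> 0" by simp
  have "((v - v0)*(1+k*u0)^2 + c*(u-u0)) * (1+k*u)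
      = (v*(1+k*u) - v0*(1+k*u))*(1+k*u0)^2 + c*(u-u0)*(1+k*u)" by (simp add: algebra_simps)
  also have "\<dots> \<ge> ((1-u) - v0*(1+k*u))*(1+k*u0)^2 + c*(u-u0)*(1+k*u)"
    using e1 pos by (simp add: mult_right_mono)
  also have "((1-u) - v0*(1+k*u)) = - (u-u0)*(1+k*v0)"
    using e2 by (simp add: algebra_simps)
  also have "- (u-u0)*(1+k*v0)*(1+k*u0)^2 + c*(u-u0)*(1+k*u) = c*k*(u-u0)^2"
  proof -
    have "- (u-u0)*(1+k*v0)*(1+k*u0)^2 = - (u-u0)*((1+k*v0)*(1+k*u0))*(1+k*u0)"
      by (simp add: power2_eq_square algebra_simps)
    also have "\<dots> = - (u-u0)*c*(1+k*u0)" using e3 by simp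
    finally show ?thesis by (simp add: power2_eq_square algebra_simps)
  qed
  finally show ?thesis by (simp add: k_def)
qed

lemma tangent:
  fixes c u v u0 v0 :: real
  assumes c: "c > 1" and u: "u > 0" and v: "v > 0" and u0: "u0 > 0" and v0: "v0 > 0"
    and f: "(1-u)/u*((1-v)/v) \<le> c" and f0: "(1-u0)/u0*((1-v0)/v0) = c"
  shows "0 \<le> (v - v0)*((1+(c-1)*u0)^2/c) + (u-u0)"
    and "(v - v0)*((1+(c-1)*u0)^2/c) + (u-u0) = 0 \<Longrightarrow> u = u0"
proof -
  have A: "((v - v0)*(1+(c-1)*u0)^2 + c*(u-u0)) * (1+(c-1)*u) \<ge> c*(c-1)*(u-u0)^2"
    by (rule tangent_aux[OF assms])
  have p1: "1+(c-1)*u > 0" using c u by (simp add: add_pos_nonneg)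
  have "c*(c-1)*(u-u0)^2 \<ge> 0" using c by simp
  then have B: "(v - v0)*(1+(c-1)*u0)^2 + c*(u-u0) \<ge> 0"
    using A p1 by (meson order_trans zero_le_mult_iff not_le)
  have eq: "(v - v0)*((1+(c-1)*u0)^2/c) + (u-u0) = ((v - v0)*(1+(c-1)*u0)^2 + c*(u-u0))/c"
    using c by (simp add: field_simps)
  show "0 \<le> (v - v0)*((1+(c-1)*u0)^2/c) + (u-u0)" unfolding eq using B c by simp
  assume "(v - v0)*((1+(c-1)*u0)^2/c) + (u-u0) = 0"
  then have "(v - v0)*(1+(c-1)*u0)^2 + c*(u-u0) = 0" unfolding eq using c by simp
  then have "c*(c-1)*(u-u0)^2 \<le> 0" using A by simp
  moreover have "c*(c-1) > 0" using c by simp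
  ultimately have "(u-u0)^2 \<le> 0" using c by (smt (verit) mult_pos_pos zero_less_power2)
  then show "u = u0" by simp
qed

definition aF :: "real \<Rightarrow> real \<Rightarrow> real" where "aF N c = 1/(1+(2*N-1)*c)"
definition sF :: "real \<Rightarrow> real \<Rightarrow> real" where
  "sF N c = (2*N-1)*(c-1)/(1+(2*N-1)*c)/(4*N*(N-1))"
definition bF :: "real \<Rightarrow> real \<Rightarrow> real" where "bF N c = sF N c/(sF N c + c*(1 - sF N c))"
definition dF :: "real \<Rightarrow> real \<Rightarrow> real" where "dF N c = (2*N-1)/(2*N-1+c)"
definition GF :: "real \<Rightarrow> real \<Rightarrow> real" where "GF N c = (2*N-2)*bF N c + dF N c - sF N c"

lemma NN8: assumes N: "N \<ge> (2::real)" shows "4*N*(N-1) \<ge> 8"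
proof -
  have "N*(N-1) \<ge> 2*1" using N by (intro mult_mono) auto
  then show ?thesis by simp
qed

lemma sF_bounds:
  assumes N: "N \<ge> 2" and c: "c \<ge> 1"
  shows "0 \<le> sF N c" "sF N c \<le> 1/(4*N*(N-1))" "sF N c \<le> 1/8"
proof -
  have p1: "4*N*(N-1) > 0" using N by simp
  have "(2*N-1)*c \<ge> 0" using N c by simp
  then have p2: "1+(2*N-1)*c > 0" by simp
  have "(2*N-1)*(c-1) \<ge> 0" using N c by simp
  then show "0 \<le> sF N c" unfolding sF_def using p1 p2 by simp
  have "(2*N-1)*(c-1) \<le> 1+(2*N-1)*c" using N by (simp add: algebra_simps)
  then have "(2*N-1)*(c-1)/(1+(2*N-1)*c) \<le> 1" using p2 by simp
  then have "(2*N-1)*(c-1)/(1+(2*N-1)*c) / (4*N*(N-1)) \<le> 1/(4*N*(N-1))"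
    by (rule divide_right_mono) (use p1 in simp)
  then show s: "sF N c \<le> 1/(4*N*(N-1))" unfolding sF_def .
  have "1/(4*N*(N-1)) \<le> 1/8" using NN8[OF N] by (simp add: frac_le)
  then show "sF N c \<le> 1/8" by (rule order_trans[OF s])
qed

lemma sF_lower:
  assumes N: "N \<ge> 2" and c: "c \<ge> 3"
  shows "sF N c \<ge> 1/(8*N*(N-1))"
proof -
  have p1: "4*N*(N-1) > 0" using N by simp
  have "(2*N-1)*c \<ge> 0" using N c by simp
  then have p2: "1+(2*N-1)*c > 0" by simp
  have "(2*N-1)*(c-2) \<ge> 3*1" using N c by (intro mult_mono) auto
  then have "1+(2*N-1)*c \<le> 2*((2*N-1)*(c-1))" by (simp add: algebra_simps)
  then have "1/2 \<le> (2*N-1)*(c-1)/(1+(2*N-1)*c)" using p2 by (simp add: field_simps)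
  then have "1/2/(4*N*(N-1)) \<le> (2*N-1)*(c-1)/(1+(2*N-1)*c)/(4*N*(N-1))"
    by (rule divide_right_mono) (use p1 in simp)
  moreover have "1/2/(4*N*(N-1)) = 1/(8*N*(N-1))" by simp
  ultimately show ?thesis unfolding sF_def by simp
qed

lemma GF_cont:
  assumes N: "N \<ge> 2"
  shows "continuous_on {1..C} (GF N)"
proof -
  have d1: "\<And>c. c \<in> {1..C} \<Longrightarrow> 1+(2*N-1)*c \<noteq> 0"
  proof -
    fix c assume "c \<in> {1..C}"
    then have "(2*N-1)*c \<ge> 0" using N by simp
    then show "1+(2*N-1)*c \<noteq> 0" by simp
  qed
  have d0: "4*N*(N-1) \<noteq> 0" using N by simp
  have d2: "\<And>c. c \<in> {1..C} \<Longrightarrow> sF N c + c*(1 - sF N c) \<noteq> 0"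
  proof -
    fix c assume "c \<in> {1..C}"
    then have c: "c \<ge> 1" by simp
    have "sF N c \<ge> 0" "sF N c \<le> 1/8" using sF_bounds[OF N c] by auto
    moreover have "c*(1 - sF N c) > 0" using c calculation by (intro mult_pos_pos) auto
    ultimately show "sF N c + c*(1 - sF N c) \<noteq> 0" by simp
  qed
  have d3: "\<And>c. c \<in> {1..C} \<Longrightarrow> 2*N-1+c \<noteq> 0" using N by auto
  have cs: "continuous_on {1..C} (sF N)" unfolding sF_def
    by (intro continuous_intros) (use d1 d0 in auto)
  show ?thesis unfolding GF_def bF_def dF_def
    by (intro continuous_intros cs) (use d2 d3 in auto)
qed

lemma GF_1: assumes N: "N \<ge> 2" shows "GF N 1 > 0"
  using N by (simp add: GF_def bF_def dF_def sF_def)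

lemma GF_big:
  assumes N: "N \<ge> 2"
  shows "GF N (64*N^3) \<le> 0"
proof -
  define C where "C = 64*N^3"
  define s where "s = sF N C"
  have N2: "N^2 \<ge> 2^2" using N by (intro power_mono) auto
  have C8: "C \<ge> 8*N"
  proof -
    have "C = 64*N*N^2" unfolding C_def by (simp add: power2_eq_square power3_eq_cube)
    also have "\<dots> \<ge> 64*N*4" using N N2 by (intro mult_left_mono) auto
    finally show ?thesis using N by simp
  qed
  have C3: "C \<ge> 3" using N C8 by simp
  have s0: "s \<ge> 1/(8*N*(N-1))" unfolding s_def using sF_lower[OF N C3] .
  have s1: "s \<le> 1/8" unfolding s_def using sF_bounds[OF N] C3 by simp
  have "8*N*(N-1) > 0" using N by simp
  then have spos: "s > 0" using s0 by (smt (verit) divide_pos_pos)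
  have Cpos: "C > 0" using C3 by simp
  have b: "bF N C \<le> 8/7 * s / C"
  proof -
    have "bF N C = s/(s + C*(1-s))" by (simp add: bF_def s_def)
    also have "\<dots> \<le> s/(C*(1-s))"
    proof -
      have "C*(1-s) > 0" using s1 Cpos by (intro mult_pos_pos) auto
      then show ?thesis using spos by (intro divide_left_mono) (auto intro!: mult_pos_pos)
    qed
    also have "\<dots> \<le> s/(C*(7/8))"
      using spos s1 Cpos by (intro divide_left_mono) (auto intro!: mult_pos_pos)
    also have "\<dots> = 8/7*s/C" by simp
    finally show ?thesis .
  qed
  have b2: "(2*N-2)*bF N C \<le> s/2"
  proof -
    have "(2*N-2)*bF N C \<le> (2*N-2)*(8/7*s/C)" using b N by (intro mult_left_mono) auto
    also have "\<dots> = s * ((16*N-16)/(7*C))" by (simp add: field_simps)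
    also have "\<dots> \<le> s * (1/2)"
    proof -
      have "(16*N-16)/(7*C) \<le> 1/2" using Cpos C8 by (simp add: field_simps)
      then show ?thesis using spos by (intro mult_left_mono) auto
    qed
    finally show ?thesis by simp
  qed
  have d: "dF N C \<le> s/2"
  proof -
    have "dF N C \<le> 2*N/C" unfolding dF_def using N Cpos by (intro frac_le) auto
    also have "\<dots> \<le> s/2"
    proof -
      have "4*N*(8*N*(N-1)) \<le> C"
      proof -
        have "4*N*(8*N*(N-1)) = 32*N*N*N - 32*N*N" by (simp add: algebra_simps)
        also have "\<dots> \<le> 64*N*N*N"
        proof -
          have "N*N*N \<ge> 0" "N*N \<ge> 0" using N by simp_all
          then show ?thesis by linarith
        qed
        finally show ?thesis unfolding C_def by (simp add: power3_eq_cube)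
      qed
      then have "4*N \<le> C/(8*N*(N-1))" using N by (simp add: field_simps)
      also have "C/(8*N*(N-1)) = 1/(8*N*(N-1)) * C" by simp
      also have "\<dots> \<le> s*C" using s0 Cpos by (intro mult_right_mono) auto
      finally have "s*C \<ge> 4*N" .
      then show ?thesis using Cpos by (simp add: field_simps)
    qed
    finally show ?thesis .
  qed
  show ?thesis unfolding C_def[symmetric] GF_def using b2 d s_def by simp
qed

lemma root_exists:
  assumes N: "N \<ge> 2"
  shows "\<exists>c>1. GF N c = 0"
proof -
  have "N^3 \<ge> 2^3" using N by (intro power_mono) auto
  then have "64*N^3 \<ge> 1" by simp
  from IVT2'[of "GF N" "64*N^3" 0 1, OF GF_big[OF N] less_imp_le[OF GF_1[OF N]] this GF_cont[OF N]]
  obtain c where c: "1 \<le> c" "c \<le> 64*N^3" "GF N c = 0" by blast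
  moreover have "c \<noteq> 1" using GF_1[OF N] c by auto
  ultimately show ?thesis by (intro exI[of _ c]) auto
qed

lemma consts_props:
  fixes N c :: real
  assumes N: "N \<ge> 2" and c: "c > 1" and G: "GF N c = 0"
  defines "a \<equiv> aF N c" and "s \<equiv> sF N c" and "b \<equiv> bF N c" and "d \<equiv> dF N c"
  shows "a > 0" "b > 0" "d > 0" "s > 0" "s \<le> 1/8"
    "a + (2*N-2)*s = 1/(2*N)"
    "s = (2*N-2)*b + d"
    "(1-a)/a * ((1 - (1 - 1/(2*N)))/(1 - 1/(2*N))) = c"
    "(1-b)/b * ((1 - (1 - s))/(1 - s)) = c"
    "(1-d)/d * ((1 - 1/(2*N))/(1/(2*N))) = c"
    "(2*N-2)*((1+(c-1)*b)^2/c) < 1"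
proof -
  have q1: "1+(2*N-1)*c > 0" using N c by (simp add: add_pos_nonneg)
  show a0: "a > 0" unfolding a_def aF_def using q1 by simp
  show d0: "d > 0" unfolding d_def dF_def using N c by simp
  have p1: "4*N*(N-1) > 0" using N by simp
  have "(2*N-1)*(c-1) > 0" using N c by simp
  then show s0: "s > 0" unfolding s_def sF_def using p1 q1 by simp
  have sb: "s \<le> 1/(4*N*(N-1))" "s \<le> 1/8" using sF_bounds[OF N] c unfolding s_def by auto
  then show "s \<le> 1/8" by simp
  have "c*(1-s) > 0" using sb c by (intro mult_pos_pos) auto
  then have den: "s + c*(1-s) > 0" using s0 by linarith
  show b0: "b > 0" unfolding b_def bF_def s_def[symmetric] using s0 den by simp
  show "a + (2*N-2)*s = 1/(2*N)"
  proof -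
    define Dn where "Dn = 1+(2*N-1)*c"
    define X where "X = (2*N-1)*(c-1)/Dn"
    have Dn: "Dn > 0" using q1 by (simp add: Dn_def)
    have e0: "s = X/(4*N*(N-1))" unfolding s_def sF_def X_def Dn_def by simp
    have e1: "(2*N-2)*s = X/(2*N)" unfolding e0 using N by (simp add: field_simps)
    have e2: "(2*N-1)*(c-1) = Dn - 2*N" unfolding Dn_def by (simp add: algebra_simps)
    have e3: "a = 1/Dn" unfolding a_def aF_def Dn_def by simp
    have "a + X/(2*N) = 1/(2*N)" unfolding e3 X_def e2 using Dn N by (simp add: field_simps)
    then show ?thesis using e1 by simp
  qed
  show sig: "s = (2*N-2)*b + d" using G unfolding GF_def b_def d_def s_def by simp
  show "(1-a)/a * ((1 - (1 - 1/(2*N)))/(1 - 1/(2*N))) = c"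
  proof -
    have r1: "(1-a)/a = (2*N-1)*c" unfolding a_def aF_def using q1 by (simp add: field_simps)
    have r2: "(1 - (1 - 1/(2*N)))/(1 - 1/(2*N)) = 1/(2*N-1)" using N by (simp add: field_simps)
    show ?thesis unfolding r1 r2 using N by simp
  qed
  show "(1-b)/b * ((1 - (1 - s))/(1 - s)) = c"
  proof -
    define Q where "Q = s + c*(1-s)"
    have Q: "Q > 0" using den by (simp add: Q_def)
    have bq: "b = s/Q" unfolding b_def bF_def s_def[symmetric] Q_def by simp
    have r1: "(1-b)/b = (Q - s)/s" unfolding bq using Q s0 by (simp add: field_simps)
    have r3: "Q - s = c*(1-s)" by (simp add: Q_def)
    have s1: "1 - s \<noteq> 0" using sb by simp
    show ?thesis unfolding r1 r3 using s0 s1 by (simp add: field_simps)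
  qed
  show "(1-d)/d * ((1 - 1/(2*N))/(1/(2*N))) = c"
  proof -
    define M where "M = 2*N-1"
    have M: "M > 0" using N by (simp add: M_def)
    have dd: "d = M/(M+c)" unfolding d_def dF_def M_def by simp
    have Mc: "M + c \<noteq> 0" using M c by simp
    have e1: "1 - d = c/(M+c)" unfolding dd using Mc by (simp add: field_simps)
    have r1: "(1-d)/d = c/M" unfolding e1 unfolding dd using M Mc by simp
    have r2: "(1 - 1/(2*N))/(1/(2*N)) = M" unfolding M_def using N by (simp add: field_simps)
    show ?thesis unfolding r1 r2 using M by simp
  qed
  have "d \<le> s" using sig b0 N by simp
  then have "(2*N-1)/(2*N-1+c) \<le> 1/(4*N*(N-1))" using sb unfolding d_def dF_def by simp
  then have "(2*N-1)*(4*N*(N-1)) \<le> 2*N-1+c" using N c p1 by (simp add: field_simps)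
  moreover have "(2*N-1)*(4*N*(N-1)) \<ge> (2*N-1)*8" using NN8[OF N] N by (intro mult_left_mono) auto
  ultimately have clow: "c \<ge> 7*(2*N-1)" by simp
  have cb: "c*b \<le> 1/7"
  proof -
    have "c*b = c*s/(s + c*(1-s))" unfolding b_def bF_def s_def[symmetric] by simp
    also have "\<dots> \<le> c*s/(c*(1-s))"
      using c s0 sb den by (intro divide_left_mono) (auto intro!: mult_pos_pos)
    also have "\<dots> = s/(1-s)" using c by simp
    also have "\<dots> \<le> 1/7" using sb s0 by (simp add: field_simps)
    finally show ?thesis .
  qed
  have x0: "(c-1)*b \<ge> 0" using c b0 by simp
  have x1: "(c-1)*b \<le> 1/7" using cb b0 by (simp add: algebra_simps)
  have "(1+(c-1)*b)^2 \<le> (8/7)^2" using x0 x1 by (intro power_mono) auto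
  then have "(2*N-2)*(1+(c-1)*b)^2 \<le> (2*N-2)*(8/7)^2" using N by (intro mult_left_mono) auto
  also have "\<dots> < c" using clow N by (simp add: power2_eq_square)
  finally show "(2*N-2)*((1+(c-1)*b)^2/c) < 1" using c by (simp add: field_simps)
qed

definition pt :: "nat \<Rightarrow> real \<Rightarrow> real \<Rightarrow> real \<Rightarrow> word \<Rightarrow> real" where
  "pt n a b d w = (if w \<in> Psi n then (if length w = 2 then a else if w!2 = ng (w!0) then d else b) else 0)"

lemma ng_neq: "l \<in> LL n \<Longrightarrow> ng l \<noteq> l" by (auto simp: ng_def LL_def signs_def prod_eq_iff)

lemma pt_A: "l \<in> LL n \<Longrightarrow> pt n a b d [l,l] = a"
  using S1_sub[of l n] by (auto simp: pt_def S1_def)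

lemma mem_S2: "l \<in> LL n \<Longrightarrow> m \<in> Lm n l \<Longrightarrow> q \<in> Lm n m \<Longrightarrow> [l,m,q] \<in> Psi n"
  using S2_sub'[of l n m] by (auto simp: S2_eq)
lemma mem_S2': "l \<in> LL n \<Longrightarrow> m \<in> Lm n l \<Longrightarrow> [l,m,m] \<in> Psi n"
  using S2_sub'[of l n m] by (auto simp: S2_eq)

lemma pt_B: "l \<in> LL n \<Longrightarrow> m \<in> Lm n l \<Longrightarrow> pt n a b d [l,m,m] = b"
  using mem_S2'[of l n m] by (auto simp: pt_def ng_def Lm_def)
lemma pt_C: "l \<in> LL n \<Longrightarrow> m \<in> Lm n l \<Longrightarrow> pt n a b d [l,m,l] = b"
  using mem_S2[of l n m l] Lm_sym[of l n m] ng_neq[of l n] by (auto simp: pt_def)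
lemma pt_D: "l \<in> LL n \<Longrightarrow> m \<in> Lm n l \<Longrightarrow> pt n a b d [l,m,ng l] = d"
proof -
  assume l: "l \<in> LL n" and m: "m \<in> Lm n l"
  have "ng l \<in> Lm n m" using l m by (auto simp: Lm_def LL_def ng_def signs_def)
  then show ?thesis using mem_S2[OF l m] by (auto simp: pt_def)
qed
lemma pt_E: "l \<in> LL n \<Longrightarrow> m \<in> Lm n l \<Longrightarrow> q \<in> El n l m \<Longrightarrow> pt n a b d [l,m,q] = b"
proof -
  assume l: "l \<in> LL n" and m: "m \<in> Lm n l" and q: "q \<in> El n l m"
  have "q \<noteq> ng l" using q by (auto simp: El_def ng_def)
  then show ?thesis using mem_S2[OF l m El_Lm[OF q]] by (auto simp: pt_def)
qed

lemma sum_S2_pt: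
  assumes n: "n \<ge> 2" and l: "l \<in> LL n" and m: "m \<in> Lm n l"
  shows "sum (pt n a b d) (S2 n l m) = (2*real n - 2)*b + d"
proof -
  have ne: "fst l \<noteq> fst m" using m by (auto simp: Lm_def)
  have "sum (pt n a b d) (S2 n l m) = b + (b + d + (\<Sum>q\<in>El n l m. b))"
    using sum_Lm_split[OF l ne, of "\<lambda>q. pt n a b d [l,m,q]"] pt_B[OF l m] pt_C[OF l m] pt_D[OF l m] pt_E[OF l m]
    by (simp add: sum_S2)
  also have "\<dots> = (2*real n - 2)*b + d"
  proof -
    have "card (El n l m) = 2*(n-2)" using l m ne by (intro card_El) (auto simp: LL_def Lm_def)
    then have "(\<Sum>q\<in>El n l m. b) = (2*real n - 4)*b" using n by (simp add: of_nat_diff)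
    then show ?thesis by (simp add: algebra_simps)
  qed
  finally show ?thesis .
qed

lemma sum_S1_pt:
  assumes n: "n \<ge> 2" and l: "l \<in> LL n"
  shows "sum (pt n a b d) (S1 n l) = a + (2*real n - 2)*((2*real n - 2)*b + d)"
proof -
  have "sum (pt n a b d) (S1 n l) = a + (\<Sum>m\<in>Lm n l. (2*real n - 2)*b + d)"
    using sum_S2_pt[OF n l] pt_A[OF l] by (simp add: sum_S1)
  also have "\<dots> = a + (2*real n - 2)*((2*real n - 2)*b + d)"
    using card_Lm[of l n] l n by (auto simp: LL_def of_nat_diff)
  finally show ?thesis .
qed

lemma Delta_D:
  assumes "x \<in> Delta n"
  shows "\<And>w. w \<in> Psi n \<Longrightarrow> x w > 0" "\<And>w. w \<notin> Psi n \<Longrightarrow> x w = 0" "sum x (Psi n) = 1"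
  using assms unfolding Delta_def mem_Collect_eq by blast+

lemma sum_pos_sub:
  assumes "x \<in> Delta n" "V \<subseteq> Psi n" "V \<noteq> {}"
  shows "sum x V > 0"
proof (rule sum_pos)
  show "finite V" using finite_subset[OF assms(2) finite_Psi] .
next
  show "V \<noteq> {}" by (rule assms(3))
next
  fix i assume "i \<in> V"
  then have "i \<in> Psi n" using assms(2) by blast
  then show "0 < x i" using Delta_D(1)[OF assms(1)] by blast
qed

lemma rel_Q:
  assumes r: "(w,V) \<in> Fam n" and x: "x \<in> Delta n" and p: "p \<in> Delta n" and c: "c > 1"
    and Fx: "FF n x \<le> c" and fp: "frel (w,V) p = c"
  shows "0 \<le> (sum x V - sum p V)*((1+(c-1)*p w)^2/c) + (x w - p w)"
    and "(sum x V - sum p V)*((1+(c-1)*p w)^2/c) + (x w - p w) = 0 \<Longrightarrow> x w = p w"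
proof -
  have w: "w \<in> Psi n" and V: "V \<subseteq> Psi n" "V \<noteq> {}" using Fam_props[OF r] by auto
  have u: "x w > 0" using Delta_D(1)[OF x w] .
  have u0: "p w > 0" using Delta_D(1)[OF p w] .
  have v: "sum x V > 0" by (rule sum_pos_sub[OF x V])
  have v0: "sum p V > 0" by (rule sum_pos_sub[OF p V])
  have f: "(1 - x w)/x w*((1 - sum x V)/sum x V) \<le> c"
    using frel_le_FF[OF r, of x] Fx by (simp add: frel_def Let_def)
  have f0: "(1 - p w)/p w*((1 - sum p V)/sum p V) = c"
    using fp by (simp add: frel_def Let_def)
  show "0 \<le> (sum x V - sum p V)*((1+(c-1)*p w)^2/c) + (x w - p w)"
    by (rule tangent(1)[OF c u v u0 v0 f f0])
  show "(sum x V - sum p V)*((1+(c-1)*p w)^2/c) + (x w - p w) = 0 \<Longrightarrow> x w = p w"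
    by (rule tangent(2)[OF c u v u0 v0 f f0])
qed

lemma diff_compl:
  assumes "x \<in> Delta n" "p \<in> Delta n" "S \<subseteq> Psi n"
  shows "sum x (Psi n - S) - sum p (Psi n - S) = - (\<Sum>w\<in>S. x w - p w)"
proof -
  have sx: "sum x (Psi n) = 1" using Delta_D(3)[OF assms(1)] .
  have sp: "sum p (Psi n) = 1" using Delta_D(3)[OF assms(2)] .
  have "sum x (Psi n - S) = sum x (Psi n) - sum x S" by (rule sum_diff[OF finite_Psi assms(3)])
  moreover have "sum p (Psi n - S) = sum p (Psi n) - sum p S" by (rule sum_diff[OF finite_Psi assms(3)])
  moreover have "(\<Sum>w\<in>S. x w - p w) = sum x S - sum p S" by (rule sum_subtractf)
  ultimately show ?thesis using sx sp by simp
qed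

lemma sum_nonneg_zero:
  fixes f :: "'a \<Rightarrow> real"
  assumes "finite A" "\<And>i. i \<in> A \<Longrightarrow> f i \<ge> 0" "sum f A = 0" "i \<in> A"
  shows "f i = 0"
proof -
  have "\<forall>i\<in>A. f i = 0" using sum_nonneg_eq_0_iff[of A f] assms(1,2,3) by blast
  then show ?thesis using assms(4) by blast
qed

theorem corollary5p7:
  fixes n :: nat
  assumes "n \<ge> 2"
  shows "\<exists>!x. x \<in> Delta n \<and> FF n x = (INF y\<in>Delta n. FF n y)"
proof -
  define N where "N = real n"
  have N: "N \<ge> 2" using assms by (simp add: N_def)
  obtain c where c: "c > 1" "GF N c = 0" using root_exists[OF N] by blast
  define a where "a = aF N c"
  define s where "s = sF N c"
  define b where "b = bF N c"
  define d where "d = dF N c"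
  note cp = consts_props[OF N c(1) c(2), folded a_def s_def b_def d_def]
  define p where "p = pt n a b d"
  have r2: "real (2*n-2) = 2*N-2" using assms by (simp add: N_def of_nat_diff)
  have sS2: "sum p (S2 n l m) = s" if "l \<in> LL n" "m \<in> Lm n l" for l m
    unfolding p_def using sum_S2_pt[OF assms that, of a b d] cp(7) by (simp add: N_def)
  have sS1: "sum p (S1 n l) = 1/(2*N)" if "l \<in> LL n" for l
  proof -
    have "sum p (S1 n l) = a + (2*N - 2)*((2*N - 2)*b + d)"
      unfolding p_def using sum_S1_pt[OF assms that, of a b d] by (simp add: N_def)
    also have "\<dots> = 1/(2*N)" using cp(6) cp(7) by simp
    finally show ?thesis .
  qed
  have sPsi: "sum p (Psi n) = 1"
  proof -
    have "sum p (Psi n) = (\<Sum>l\<in>LL n. 1/(2*N))" unfolding sum_Psi by (rule sum.cong) (auto simp: sS1)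
    also have "\<dots> = 1" using N by (simp add: card_LL N_def)
    finally show ?thesis .
  qed
  have pD: "p \<in> Delta n"
  proof -
    have "\<forall>w\<in>Psi n. p w > 0" using cp(1,2,3) by (auto simp: p_def pt_def)
    moreover have "\<forall>w. w \<notin> Psi n \<longrightarrow> p w = 0" by (auto simp: p_def pt_def)
    ultimately show ?thesis using sPsi unfolding Delta_def by blast
  qed
  have cmpl: "sum p (Psi n - S) = 1 - sum p S" if "S \<subseteq> Psi n" for S
    using sum_diff[OF finite_Psi that, of p] sPsi by simp
  have frelp: "frel r p = c" if r: "r \<in> Fam n" for r
    using r
  proof (cases rule: Fam_cases)
    case (A l)
    have V: "sum p (Psi n - S1 n l) = 1 - 1/(2*N)" using cmpl[OF S1_sub[OF A(1)]] sS1[OF A(1)] by simp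
    have P: "p [l,l] = a" unfolding p_def by (rule pt_A[OF A(1)])
    have "frel r p = (1-a)/a * ((1 - (1 - 1/(2*N)))/(1 - 1/(2*N)))"
      unfolding A(2) frel_def Let_def fst_conv snd_conv V P ..
    then show ?thesis using cp(8) by simp
  next
    case (B l m)
    have "sum p (Psi n - S2 n l m) = 1 - s" using cmpl[OF S2_sub'[OF B(1,2)]] sS2[OF B(1,2)] by simp
    moreover have "p [l,m,m] = b" unfolding p_def by (rule pt_B[OF B(1,2)])
    ultimately show ?thesis using cp(9) B(3) by (simp add: frel_def Let_def)
  next
    case (C l m)
    have m: "m \<in> LL n" "l \<in> Lm n m" using Lm_LL[OF C(2)] Lm_sym[OF C(1,2)] by auto
    have "sum p (Psi n - S2 n m l) = 1 - s" using cmpl[OF S2_sub'[OF m]] sS2[OF m] by simp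
    moreover have "p [l,m,l] = b" unfolding p_def by (rule pt_C[OF C(1,2)])
    ultimately show ?thesis using cp(9) C(3) by (simp add: frel_def Let_def)
  next
    case (D l m)
    have P: "p [l,m,ng l] = d" unfolding p_def by (rule pt_D[OF D(1,2)])
    have "frel r p = (1-d)/d * ((1 - 1/(2*N))/(1/(2*N)))"
      unfolding D(3) frel_def Let_def fst_conv snd_conv sS1[OF D(1)] P ..
    then show ?thesis using cp(10) by simp
  next
    case (E l m q)
    have m: "m \<in> LL n" "q \<in> Lm n m" using Lm_LL[OF E(2)] El_Lm[OF E(3)] by auto
    have "sum p (Psi n - S2 n m q) = 1 - s" using cmpl[OF S2_sub'[OF m]] sS2[OF m] by simp
    moreover have "p [l,m,q] = b" unfolding p_def by (rule pt_E[OF E(1,2,3)])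
    ultimately show ?thesis using cp(9) E(4) by (simp add: frel_def Let_def)
  qed
  have FFp: "FF n p = c"
  proof -
    have "(\<lambda>r. frel r p) ` Fam n = {c}" using frelp Fam_ne[of n] assms by auto
    then show ?thesis by (simp add: FF_def)
  qed
  have key: "x = p" if x: "x \<in> Delta n" and Fx: "FF n x \<le> c" for x
  proof -
    define h where "h = (\<lambda>w. x w - p w)"
    define gA where "gA = (1+(c-1)*a)^2/c"
    define gB where "gB = (1+(c-1)*b)^2/c"
    define gD where "gD = (1+(c-1)*d)^2/c"
    have h0: "sum h (Psi n) = 0" unfolding h_def using Delta_D(3)[OF x] sPsi by (simp add: sum_subtractf)
    have gen: "0 \<le> S*((1+(c-1)*p w)^2/c) + h w \<and> (S*((1+(c-1)*p w)^2/c) + h w = 0 \<longrightarrow> h w = 0)"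
      if "(w,V) \<in> Fam n" "sum x V - sum p V = S" for w V S
    proof -
      note R = rel_Q[OF that(1) x pD c(1) Fx frelp[OF that(1)], unfolded that(2)]
      show ?thesis unfolding h_def using R by auto
    qed
    have dc: "sum x (Psi n - S) - sum p (Psi n - S) = - sum h S" if "S \<subseteq> Psi n" for S
      using diff_compl[OF x pD that] by (simp add: h_def)
    define TA where "TA l = - gA * sum h (S1 n l) + h [l,l]" for l
    define TB where "TB l m = - gB * sum h (S2 n l m) + h [l,m,m]" for l m
    define TC where "TC l m = - gB * sum h (S2 n m l) + h [l,m,l]" for l m
    define TD where "TD l m = gD * sum h (S1 n l) + h [l,m,ng l]" for l m
    define TE where "TE l m q = - gB * sum h (S2 n m q) + h [l,m,q]" for l m q
    have QA: "0 \<le> TA l \<and> (TA l = 0 \<longrightarrow> h [l,l] = 0)" if l: "l \<in> LL n" for l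
    proof -
      have P: "p [l,l] = a" unfolding p_def by (rule pt_A[OF l])
      have F: "0 \<le> (- sum h (S1 n l))*gA + h [l,l] \<and> ((- sum h (S1 n l))*gA + h [l,l] = 0 \<longrightarrow> h [l,l] = 0)"
        using gen[OF Fam_A[OF l] dc[OF S1_sub[OF l]]] unfolding P gA_def .
      have eq: "(- sum h (S1 n l))*gA + h [l,l] = TA l" unfolding TA_def by (simp add: algebra_simps)
      show ?thesis using F unfolding eq .
    qed
    have QB: "0 \<le> TB l m \<and> (TB l m = 0 \<longrightarrow> h [l,m,m] = 0)" if l: "l \<in> LL n" "m \<in> Lm n l" for l m
    proof -
      have P: "p [l,m,m] = b" unfolding p_def by (rule pt_B[OF l])
      have F: "0 \<le> (- sum h (S2 n l m))*gB + h [l,m,m] \<and> ((- sum h (S2 n l m))*gB + h [l,m,m] = 0 \<longrightarrow> h [l,m,m] = 0)"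
        using gen[OF Fam_B[OF l] dc[OF S2_sub'[OF l]]] unfolding P gB_def .
      have eq: "(- sum h (S2 n l m))*gB + h [l,m,m] = TB l m" unfolding TB_def by (simp add: algebra_simps)
      show ?thesis using F unfolding eq .
    qed
    have QC: "0 \<le> TC l m \<and> (TC l m = 0 \<longrightarrow> h [l,m,l] = 0)" if l: "l \<in> LL n" "m \<in> Lm n l" for l m
    proof -
      have m: "m \<in> LL n" "l \<in> Lm n m" using Lm_LL[OF l(2)] Lm_sym[OF l] by auto
      have P: "p [l,m,l] = b" unfolding p_def by (rule pt_C[OF l])
      have F: "0 \<le> (- sum h (S2 n m l))*gB + h [l,m,l] \<and> ((- sum h (S2 n m l))*gB + h [l,m,l] = 0 \<longrightarrow> h [l,m,l] = 0)"
        using gen[OF Fam_C[OF l] dc[OF S2_sub'[OF m]]] unfolding P gB_def .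
      have eq: "(- sum h (S2 n m l))*gB + h [l,m,l] = TC l m" unfolding TC_def by (simp add: algebra_simps)
      show ?thesis using F unfolding eq .
    qed
    have QD: "0 \<le> TD l m \<and> (TD l m = 0 \<longrightarrow> h [l,m,ng l] = 0)" if l: "l \<in> LL n" "m \<in> Lm n l" for l m
    proof -
      have e: "sum x (S1 n l) - sum p (S1 n l) = sum h (S1 n l)" by (simp add: h_def sum_subtractf)
      have P: "p [l,m,ng l] = d" unfolding p_def by (rule pt_D[OF l])
      have F: "0 \<le> (sum h (S1 n l))*gD + h [l,m,ng l] \<and> ((sum h (S1 n l))*gD + h [l,m,ng l] = 0 \<longrightarrow> h [l,m,ng l] = 0)"
        using gen[OF Fam_D[OF l] e] unfolding P gD_def .
      have eq: "(sum h (S1 n l))*gD + h [l,m,ng l] = TD l m" unfolding TD_def by (simp add: algebra_simps)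
      show ?thesis using F unfolding eq .
    qed
    have QE: "0 \<le> TE l m q \<and> (TE l m q = 0 \<longrightarrow> h [l,m,q] = 0)" if l: "l \<in> LL n" "m \<in> Lm n l" "q \<in> El n l m" for l m q
    proof -
      have m: "m \<in> LL n" "q \<in> Lm n m" using Lm_LL[OF l(2)] El_Lm[OF l(3)] by auto
      have P: "p [l,m,q] = b" unfolding p_def by (rule pt_E[OF l])
      have F: "0 \<le> (- sum h (S2 n m q))*gB + h [l,m,q] \<and> ((- sum h (S2 n m q))*gB + h [l,m,q] = 0 \<longrightarrow> h [l,m,q] = 0)"
        using gen[OF Fam_E[OF l] dc[OF S2_sub'[OF m]]] unfolding P gB_def .
      have eq: "(- sum h (S2 n m q))*gB + h [l,m,q] = TE l m q" unfolding TE_def by (simp add: algebra_simps)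
      show ?thesis using F unfolding eq .
    qed
    define inner where "inner l m = TB l m + TC l m + TD l m + (\<Sum>q\<in>El n l m. TE l m q)" for l m
    have tot: "(1 - real (2*n-2) * gB) * (\<Sum>l\<in>LL n. TA l) + (\<Sum>l\<in>LL n. \<Sum>m\<in>Lm n l. inner l m) = 0"
      unfolding TA_def inner_def TB_def TC_def TD_def TE_def by (rule Tot_zero[OF assms h0])
    have om: "1 - real (2*n-2) * gB > 0" using cp(11) unfolding r2 gB_def by simp
    have innerpos: "inner l m \<ge> 0" if "l \<in> LL n" "m \<in> Lm n l" for l m
      unfolding inner_def using QB[OF that] QC[OF that] QD[OF that] QE[OF that]
      by (simp add: sum_nonneg add_nonneg_nonneg)
    have SA: "(\<Sum>l\<in>LL n. TA l) \<ge> 0" using QA by (simp add: sum_nonneg)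
    have SI: "(\<Sum>l\<in>LL n. \<Sum>m\<in>Lm n l. inner l m) \<ge> 0" using innerpos by (simp add: sum_nonneg)
    have SA0: "(\<Sum>l\<in>LL n. TA l) = 0"
    proof -
      have "(1 - real (2*n-2) * gB) * (\<Sum>l\<in>LL n. TA l) \<ge> 0" using om SA by simp
      then have "(1 - real (2*n-2) * gB) * (\<Sum>l\<in>LL n. TA l) = 0" using tot SI by linarith
      then show ?thesis using om by simp
    qed
    have SI0: "(\<Sum>l\<in>LL n. \<Sum>m\<in>Lm n l. inner l m) = 0" using tot SA0 by simp
    have hA: "h [l,l] = 0" if l: "l \<in> LL n" for l
      using QA[OF l] sum_nonneg_zero[OF finite_LL _ SA0 l] QA by blast
    have inner0: "inner l m = 0" if lm: "l \<in> LL n" "m \<in> Lm n l" for l m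
    proof -
      have "(\<Sum>m\<in>Lm n l. inner l m) = 0"
        using sum_nonneg_zero[OF finite_LL _ SI0 lm(1)] innerpos by (simp add: sum_nonneg)
      then show ?thesis using sum_nonneg_zero[OF finite_Lm _ _ lm(2)] innerpos[OF lm(1)] by blast
    qed
    have h3: "h [l,m,m] = 0 \<and> h [l,m,l] = 0 \<and> h [l,m,ng l] = 0 \<and> (\<forall>q\<in>El n l m. h [l,m,q] = 0)"
      if lm: "l \<in> LL n" "m \<in> Lm n l" for l m
    proof -
      have i0: "inner l m = 0" by (rule inner0[OF lm])
      have sE: "(\<Sum>q\<in>El n l m. TE l m q) \<ge> 0" using QE[OF lm] by (simp add: sum_nonneg)
      have b0: "TB l m = 0" "TC l m = 0" "TD l m = 0" "(\<Sum>q\<in>El n l m. TE l m q) = 0"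
        using i0 sE QB[OF lm] QC[OF lm] QD[OF lm] unfolding inner_def by linarith+
      have "\<forall>q\<in>El n l m. TE l m q = 0"
        using sum_nonneg_zero[OF finite_El _ b0(4)] QE[OF lm] by blast
      then show ?thesis using b0 QB[OF lm] QC[OF lm] QD[OF lm] QE[OF lm] by blast
    qed
    have sq0: "sum (\<lambda>w. (h w)^2) (Psi n) = 0"
      unfolding sum_Psi
    proof (rule sum.neutral, rule ballI)
      fix l assume l: "l \<in> LL n"
      show "sum (\<lambda>w. (h w)^2) (S1 n l) = 0"
        unfolding words_in_S1[OF l] using hA[OF l] h3[OF l] by simp
    qed
    have "\<forall>w\<in>Psi n. (h w)^2 = 0"
    proof
      fix w assume w: "w \<in> Psi n"
      show "(h w)^2 = 0" by (rule sum_nonneg_zero[OF finite_Psi _ sq0 w]) simp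
    qed
    then have onPsi: "\<And>w. w \<in> Psi n \<Longrightarrow> x w = p w" by (simp add: h_def)
    show "x = p"
    proof
      fix w show "x w = p w"
        using onPsi[of w] Delta_D(2)[OF x, of w] Delta_D(2)[OF pD, of w] by (cases "w \<in> Psi n") auto
    qed
  qed
  have lower: "c \<le> FF n y" if y: "y \<in> Delta n" for y
  proof (rule ccontr)
    assume "\<not> c \<le> FF n y"
    then have "FF n y \<le> c" "FF n y \<noteq> c" by auto
    then show False using key[OF y] FFp by auto
  qed
  have INF: "(INF y\<in>Delta n. FF n y) = c"
    by (rule cInf_eq_minimum) (use pD FFp lower in auto)
  show ?thesis
  proof (rule ex1I[of _ p])
    show "p \<in> Delta n \<and> FF n p = (INF y\<in>Delta n. FF n y)" using pD FFp INF by simp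
  next
    fix y assume "y \<in> Delta n \<and> FF n y = (INF y\<in>Delta n. FF n y)"
    then show "y = p" using key INF by auto
  qed
qed

end
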